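(* Let $f:\mathbb R^n\to\mathbb R$ be a non-degenerate polynomial with $f(0)=0$. Then $$L_e(f)=\sup\{h(a):a\in R_1\},\qquad R_1=\{a\in\mathbb R^n_{\ge0}:0\le m_f(a)\le1\}.$$
   Context: Write $f=\sum_\nu c_\nu x^\nu$. $\Gamma_+(f)$ is the convex hull of $\bigcup_{c_\nu\ne0}(\nu+\mathbb R^n_{\ge0})$. For $a\in\mathbb R^n_{\ge0}$: $m_f(a)=\min\{\langle a,\nu\rangle:\nu\in\Gamma_+(f)\}$, $\gamma_f(a)=\{\nu\in\Gamma_+(f):\langle a,\nu\rangle=m_f(a)\}$, $s(a)=\sum_ia_i$, $h(a)=m_f(a)-s(a)$. For a face $\gamma$, $f_\gamma=\sum_{\nu\in\gamma}c_\nu x^\nu$; $f$ is non-degenerate if for every compact face $\gamma$, $\nabla f_\gamma$ does not vanish at points of $(\mathbb R^* )^n$ where $f_\gamma=0$. On $\mathbb R^n_{\ge0}$ put $a\sim b$ iff $\gamma_f(a)=\gamma_f(b)$; this gives a subdivision of $\mathbb R^n_{\ge0}$ into cones; $\Gamma^{(1)}(f)$ is the set of primitive integer generators of its one-dimensional cones and $\Gamma^{(1)}_+(f)=\{a\in\Gamma^{(1)}(f):m_f(a)>0\}$. The leading exponent is $L_e(f)=\sup\bigl(\{0\}\cup\{1-s(a)/m_f(a):a\in\Gamma^{(1)}_+(f)\}\bigr)$. *)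

theory Defs
  imports "HOL-Analysis.Analysis"
begin

text \<open>A real polynomial in n variables (n = CARD('n)) is given by its coefficient
  function c on exponent vectors nu in N^n, with finite support.\<close>

definition supp :: "(nat ^ 'n \<Rightarrow> real) \<Rightarrow> (nat ^ 'n) set" where
  "supp c = {nu. c nu \<noteq> 0}"

definition expv :: "nat ^ 'n \<Rightarrow> real ^ 'n" where
  "expv nu = (\<chi> i. real (nu $ i))"

definition monom :: "real ^ 'n \<Rightarrow> nat ^ 'n \<Rightarrow> real" where
  "monom x nu = (\<Prod>i\<in>UNIV. (x $ i) ^ (nu $ i))"

text \<open>f_S(x) = sum of c_nu x^nu over exponents nu lying in S; f itself is f_UNIV.\<close>
definition polyfun :: "(nat ^ 'n \<Rightarrow> real) \<Rightarrow> (real ^ 'n) set \<Rightarrow> real ^ 'n \<Rightarrow> real" where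
  "polyfun c S x = (\<Sum>nu\<in>{nu \<in> supp c. expv nu \<in> S}. c nu * monom x nu)"

definition nonneg_orthant :: "(real ^ 'n) set" where
  "nonneg_orthant = {y. \<forall>i. 0 \<le> y $ i}"

definition newton :: "(nat ^ 'n \<Rightarrow> real) \<Rightarrow> (real ^ 'n) set" where
  "newton c = convex hull (\<Union>nu\<in>supp c. {expv nu + y | y. y \<in> nonneg_orthant})"

definition mf :: "(nat ^ 'n \<Rightarrow> real) \<Rightarrow> real ^ 'n \<Rightarrow> real" where
  "mf c a = Inf {a \<bullet> v | v. v \<in> newton c}"

definition gammaf :: "(nat ^ 'n \<Rightarrow> real) \<Rightarrow> real ^ 'n \<Rightarrow> (real ^ 'n) set" where
  "gammaf c a = {v \<in> newton c. a \<bullet> v = mf c a}"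

definition ssum :: "real ^ 'n \<Rightarrow> real" where
  "ssum a = (\<Sum>i\<in>UNIV. a $ i)"

definition hf :: "(nat ^ 'n \<Rightarrow> real) \<Rightarrow> real ^ 'n \<Rightarrow> real" where
  "hf c a = mf c a - ssum a"

definition nondegenerate :: "(nat ^ 'n \<Rightarrow> real) \<Rightarrow> bool" where
  "nondegenerate c \<longleftrightarrow>
     (\<forall>\<gamma>. \<gamma> face_of newton c \<and> compact \<gamma> \<and> \<gamma> \<noteq> {} \<longrightarrow>
        (\<forall>x. (\<forall>i. x $ i \<noteq> 0) \<and> polyfun c \<gamma> x = 0 \<longrightarrow>
             \<not> ((polyfun c \<gamma>) has_derivative (\<lambda>h. 0)) (at x)))"

text \<open>The cone (equivalence class) of a in the subdivision of R^n_{>=0}.\<close>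
definition fcone :: "(nat ^ 'n \<Rightarrow> real) \<Rightarrow> real ^ 'n \<Rightarrow> (real ^ 'n) set" where
  "fcone c a = {b \<in> nonneg_orthant. gammaf c b = gammaf c a}"

definition Gamma1 :: "(nat ^ 'n \<Rightarrow> real) \<Rightarrow> (real ^ 'n) set" where
  "Gamma1 c = {expv k | k. Gcd (range (\<lambda>i. k $ i)) = 1 \<and> aff_dim (fcone c (expv k)) = 1}"

definition Gamma1_plus :: "(nat ^ 'n \<Rightarrow> real) \<Rightarrow> (real ^ 'n) set" where
  "Gamma1_plus c = {a \<in> Gamma1 c. mf c a > 0}"

definition leading_exponent :: "(nat ^ 'n \<Rightarrow> real) \<Rightarrow> real" where
  "leading_exponent c = Sup ({0} \<union> {1 - ssum a / mf c a | a. a \<in> Gamma1_plus c})"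

end

theory Submission
  imports Defs
begin

lemma inner_expv: "a \<bullet> expv nu = (\<Sum>i\<in>UNIV. a $ i * real (nu $ i))"
  by (simp add: inner_vec_def expv_def)

lemma expv_nonneg: "expv nu \<in> nonneg_orthant"
  by (simp add: nonneg_orthant_def expv_def)

lemma inner_nonneg_orth: "a \<in> nonneg_orthant \<Longrightarrow> y \<in> nonneg_orthant \<Longrightarrow> 0 \<le> a \<bullet> y"
  unfolding nonneg_orthant_def inner_vec_def by (auto intro!: sum_nonneg)

lemma gen_in_newton: "nu \<in> supp c \<Longrightarrow> y \<in> nonneg_orthant \<Longrightarrow> expv nu + y \<in> newton c"
  unfolding newton_def by (rule hull_inc) blast

lemma expv_in_newton: "nu \<in> supp c \<Longrightarrow> expv nu \<in> newton c"
  using gen_in_newton[of nu c 0] by (simp add: nonneg_orthant_def)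

lemma newton_lower:
  assumes "\<forall>nu\<in>supp c. M \<le> a \<bullet> expv nu" "a \<in> nonneg_orthant" "v \<in> newton c"
  shows "M \<le> a \<bullet> v"
proof -
  have "newton c \<subseteq> {v. M \<le> a \<bullet> v}"
    unfolding newton_def
  proof (rule hull_minimal)
    show "convex {v. M \<le> a \<bullet> v}" by (rule convex_halfspace_ge)
    show "(\<Union>nu\<in>supp c. {expv nu + y |y. y \<in> nonneg_orthant}) \<subseteq> {v. M \<le> a \<bullet> v}"
      using assms(1,2) inner_nonneg_orth by (fastforce simp: inner_add_right)
  qed
  then show ?thesis using assms(3) by auto
qed

lemma mf_char:
  assumes "a \<in> nonneg_orthant" "nu0 \<in> supp c" "a \<bullet> expv nu0 = M" "\<forall>nu\<in>supp c. M \<le> a \<bullet> expv nu"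
  shows "mf c a = M"
  unfolding mf_def
proof (rule cInf_eq_minimum)
  show "M \<in> {a \<bullet> v |v. v \<in> newton c}" using assms expv_in_newton by blast
  show "\<And>x. x \<in> {a \<bullet> v |v. v \<in> newton c} \<Longrightarrow> M \<le> x"
    using newton_lower assms by blast
qed

lemma mf_props:
  assumes "finite (supp c)" "supp c \<noteq> {}" "a \<in> nonneg_orthant"
  shows "\<exists>nu0\<in>supp c. a \<bullet> expv nu0 = mf c a" "\<forall>nu\<in>supp c. mf c a \<le> a \<bullet> expv nu"
    "\<forall>v\<in>newton c. mf c a \<le> a \<bullet> v"
proof -
  define M where "M = Min ((\<lambda>nu. a \<bullet> expv nu) ` supp c)"
  have fin: "finite ((\<lambda>nu. a \<bullet> expv nu) ` supp c)" using assms by simp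
  have "M \<in> (\<lambda>nu. a \<bullet> expv nu) ` supp c" unfolding M_def using fin assms by (intro Min_in) auto
  then obtain nu0 where nu0: "nu0 \<in> supp c" "a \<bullet> expv nu0 = M" by auto
  have le: "\<forall>nu\<in>supp c. M \<le> a \<bullet> expv nu" unfolding M_def using fin by auto
  have "mf c a = M" using mf_char[OF assms(3) nu0 le] .
  then show "\<exists>nu0\<in>supp c. a \<bullet> expv nu0 = mf c a" "\<forall>nu\<in>supp c. mf c a \<le> a \<bullet> expv nu"
    "\<forall>v\<in>newton c. mf c a \<le> a \<bullet> v"
    using nu0 le newton_lower[OF le assms(3)] by auto
qed

lemma nonneg_scale: "a \<in> nonneg_orthant \<Longrightarrow> 0 \<le> t \<Longrightarrow> t *\<^sub>R a \<in> nonneg_orthant"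
  by (simp add: nonneg_orthant_def)

lemma mf_scale:
  assumes "finite (supp c)" "supp c \<noteq> {}" "a \<in> nonneg_orthant" "0 \<le> t"
  shows "mf c (t *\<^sub>R a) = t * mf c a"
proof -
  obtain nu0 where "nu0\<in>supp c" "a \<bullet> expv nu0 = mf c a" using mf_props[OF assms(1-3)] by blast
  moreover have "\<forall>nu\<in>supp c. t * mf c a \<le> (t *\<^sub>R a) \<bullet> expv nu"
    using mf_props(2)[OF assms(1-3)] assms(4) by (auto intro: mult_left_mono)
  ultimately show ?thesis
    using mf_char[of "t *\<^sub>R a" nu0 c "t * mf c a"] by (auto simp: nonneg_scale assms)
qed

lemma gammaf_scale:
  assumes "finite (supp c)" "supp c \<noteq> {}" "a \<in> nonneg_orthant" "0 < t"
  shows "gammaf c (t *\<^sub>R a) = gammaf c a"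
  using mf_scale[OF assms(1-3), of t] assms(4) unfolding gammaf_def by auto

lemma mf_nonneg:
  assumes "finite (supp c)" "supp c \<noteq> {}" "a \<in> nonneg_orthant"
  shows "0 \<le> mf c a"
proof -
  obtain nu0 where "nu0\<in>supp c" "a \<bullet> expv nu0 = mf c a" using mf_props[OF assms] by blast
  then show ?thesis using inner_nonneg_orth[OF assms(3) expv_nonneg, of nu0] by simp
qed

lemma mf_zero:
  assumes "finite (supp c)" "supp c \<noteq> {}"
  shows "mf c 0 = 0"
  using mf_props[OF assms, of 0] by (auto simp: nonneg_orthant_def)

lemma gammaf_zero:
  assumes "finite (supp c)" "supp c \<noteq> {}"
  shows "gammaf c 0 = newton c"
  using mf_zero[OF assms] unfolding gammaf_def by auto

lemma aff_dim_ray: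
  fixes a :: "real ^ 'n"
  assumes "a \<noteq> 0"
  shows "aff_dim {t *\<^sub>R a | t. 0 < t} = 1"
proof -
  let ?R = "{t *\<^sub>R a | t. 0 < t}"
  have "?R \<subseteq> span {a}" by (auto intro: span_mul span_base)
  then have "aff_dim ?R \<le> aff_dim (span {a})" by (rule aff_dim_subset)
  also have "\<dots> = 1" using assms by (simp add: aff_dim_subspace)
  finally have le: "aff_dim ?R \<le> 1" .
  have "a \<in> ?R" by (auto intro!: exI[of _ 1])
  moreover have "2 *\<^sub>R a \<in> ?R" by auto
  moreover have "2 *\<^sub>R a \<noteq> a" using assms
    by (metis scaleR_cancel_right scaleR_one numeral_One numeral_eq_iff semiring_norm(85))
  ultimately have "\<not> (\<exists>b. ?R = {b})" by (metis singletonD)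
  then have "aff_dim ?R \<noteq> 0" by (simp add: aff_dim_eq_0)
  moreover have "?R \<noteq> {}" using \<open>a \<in> ?R\<close> by blast
  then have "aff_dim ?R \<noteq> -1" by (simp add: aff_dim_empty)
  ultimately show ?thesis using le aff_dim_geq[of ?R] by linarith
qed

lemma rats_common_denom:
  assumes "finite X" "X \<subseteq> \<rat>"
  shows "\<exists>D::nat. D > 0 \<and> (\<forall>x\<in>X. real D * x \<in> \<int>)"
  using assms
proof (induction X rule: finite_induct)
  case empty then show ?case by (auto intro!: exI[of _ 1])
next
  case (insert x X)
  then obtain D::nat where D: "D > 0" "\<forall>y\<in>X. real D * y \<in> \<int>" by auto
  from insert have "x \<in> \<rat>" by auto
  then obtain p q where pq: "q > 0" "x = of_int p / of_int q" by (rule Rats_cases')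
  define D' where "D' = D * nat q"
  have "D' > 0" using D pq by (simp add: D'_def)
  moreover have "real D' * x \<in> \<int>" using pq by (simp add: D'_def)
  moreover have "real D' * y \<in> \<int>" if "y \<in> X" for y
  proof -
    have "real D' * y = of_int q * (real D * y)" using pq by (simp add: D'_def)
    moreover have "real D * y \<in> \<int>" using D that by simp
    ultimately show ?thesis by (metis Ints_mult Ints_of_int)
  qed
  ultimately show ?case by auto
qed

lemma nat_floor_Ints: "y \<in> \<int> \<Longrightarrow> 0 \<le> y \<Longrightarrow> real (nat \<lfloor>y\<rfloor>) = y"
  by (metis Ints_cases floor_of_int of_int_0_le_iff of_nat_nat of_int_of_nat_eq)

lemma primitive_vec:
  fixes x :: "real^'n"
  assumes "\<forall>i. x$i \<in> \<rat>" "x \<in> nonneg_orthant" "x \<noteq> 0"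
  shows "\<exists>k::nat^'n. \<exists>t>0. expv k = t *\<^sub>R x \<and> Gcd (range (\<lambda>i. k$i)) = 1"
proof -
  obtain D::nat where D: "D > 0" "\<forall>y\<in>range (\<lambda>i. x$i). real D * y \<in> \<int>"
    using rats_common_denom[of "range (\<lambda>i. x$i)"] assms(1) by auto
  define k0 where "k0 = (\<chi> i. nat \<lfloor>real D * x$i\<rfloor>)"
  have k0: "real (k0$i) = real D * x$i" for i
    unfolding k0_def using D assms(2) by (simp add: nat_floor_Ints nonneg_orthant_def)
  obtain j where j: "x$j \<noteq> 0" using assms(3) by (metis vec_eq_iff zero_index)
  then have "k0$j \<noteq> 0" using k0[of j] D by (metis of_nat_0 mult_eq_0_iff of_nat_0_less_iff less_irrefl)
  define g where "g = Gcd (range (\<lambda>i. k0$i))"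
  have "g \<noteq> 0" unfolding g_def using \<open>k0$j \<noteq> 0\<close> by (auto simp: subset_iff)
  have gd: "g dvd k0$i" for i unfolding g_def by (rule Gcd_dvd) auto
  define k where "k = (\<chi> i. k0$i div g)"
  have k0k: "k0$i = g * k$i" for i using gd[of i] by (simp add: k_def)
  have "range (\<lambda>i. k0$i) = (*) g ` range (\<lambda>i. k$i)" using k0k by auto
  moreover have "Gcd ((*) g ` range (\<lambda>i. k$i)) = g * Gcd (range (\<lambda>i. k$i))"
    by (simp add: Gcd_mult)
  ultimately have "g = g * Gcd (range (\<lambda>i. k$i))" unfolding g_def by simp
  then have G: "Gcd (range (\<lambda>i. k$i)) = 1" using \<open>g \<noteq> 0\<close> by simp
  have "expv k = (real D / real g) *\<^sub>R x"
  proof -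
    have "real (k$i) = real D / real g * x$i" for i
    proof -
      have "real g * real (k$i) = real D * x$i" using k0[of i] k0k[of i] by simp
      then show ?thesis using \<open>g \<noteq> 0\<close> by (simp add: field_simps)
    qed
    then show ?thesis by (simp add: expv_def vec_eq_iff)
  qed
  moreover have "real D / real g > 0" using D \<open>g \<noteq> 0\<close> by simp
  ultimately show ?thesis using G by blast
qed

lemma rat_functional:
  "\<exists>\<phi>::real \<Rightarrow> rat. (\<forall>x y. \<phi> (x+y) = \<phi> x + \<phi> y) \<and> (\<forall>q x. \<phi> (of_rat q * x) = q * \<phi> x) \<and> \<phi> 1 = 1"
proof -
  interpret vs1: vector_space "\<lambda>q::rat. \<lambda>x::real. of_rat q * x"
    by unfold_locales (auto simp: algebra_simps of_rat_add of_rat_mult)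
  interpret vs2: vector_space "\<lambda>q::rat. \<lambda>x::rat. q * x"
    by unfold_locales (auto simp: algebra_simps)
  interpret vp: vector_space_pair "\<lambda>q::rat. \<lambda>x::real. of_rat q * x" "\<lambda>q::rat. \<lambda>x::rat. q * x" ..
  have "vs1.independent {1}"
    by (simp add: vs1.independent_insert vs1.span_empty)
  then obtain g where g: "Vector_Spaces.linear (\<lambda>q::rat. \<lambda>x::real. of_rat q * x) (\<lambda>q::rat. \<lambda>x::rat. q * x) g" "g 1 = 1"
    using vp.linear_independent_extend[of "{1}" "\<lambda>_. 1"] by auto
  show ?thesis
    apply (rule exI[of _ g])
    using g by (auto simp: Vector_Spaces.linear_iff_module_hom module_hom_iff)
qed

lemma add_hom_sum:
  assumes "\<forall>x y. \<phi> (x+y) = \<phi> x + (\<phi> y::rat)"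
  shows "\<phi> (sum f S) = (\<Sum>i\<in>S. \<phi> (f i))"
proof -
  have z: "\<phi> 0 = 0" using assms[rule_format, of 0 0] by simp
  show ?thesis
  proof (cases "finite S")
    case True then show ?thesis by (induction S rule: finite_induct) (auto simp: z assms)
  next
    case False then show ?thesis by (simp add: z)
  qed
qed

lemma ssum_inner: "ssum x = x \<bullet> (\<chi> i. 1)"
  by (simp add: ssum_def inner_vec_def)

lemma ssum_add: "ssum (x + y) = ssum x + ssum y" by (simp add: ssum_inner inner_add_left)
lemma ssum_scale: "ssum (t *\<^sub>R x) = t * ssum x" by (simp add: ssum_inner)
lemma ssum_diff: "ssum (x - y) = ssum x - ssum y" by (simp add: ssum_inner inner_diff_left)

lemma vertex_ray:
  fixes c :: "nat ^ 'n \<Rightarrow> real"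
  assumes fin: "finite (supp c)" and ne: "supp c \<noteq> {}"
    and zN: "z \<in> nonneg_orthant" and zmf: "mf c z = 1"
    and K: "\<And>d. (\<forall>i. z$i = 0 \<longrightarrow> d$i = 0) \<Longrightarrow> (\<forall>nu\<in>supp c. z \<bullet> expv nu = 1 \<longrightarrow> d \<bullet> expv nu = 0) \<Longrightarrow> d = 0"
  shows "\<exists>r\<in>Gamma1_plus c. ssum r / mf c r = ssum z"
proof -
  obtain nu0 where nu0: "nu0 \<in> supp c" "z \<bullet> expv nu0 = 1" using mf_props(1)[OF fin ne zN] zmf by auto
  have zge: "\<forall>nu\<in>supp c. 1 \<le> z \<bullet> expv nu" using mf_props(2)[OF fin ne zN] zmf by auto
  have "z \<noteq> 0" using nu0 by auto
  have axN: "axis i 1 \<in> nonneg_orthant" for i by (simp add: nonneg_orthant_def axis_def)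
  have ingz: "v \<in> gammaf c z" if "v \<in> newton c" "z \<bullet> v = 1" for v
    using that zmf by (simp add: gammaf_def)
  have ray: "\<exists>t>0. b = t *\<^sub>R z" if b: "b \<in> fcone c z" for b
  proof -
    have bN: "b \<in> nonneg_orthant" and gb: "gammaf c b = gammaf c z" using b by (auto simp: fcone_def)
    have bv: "b \<bullet> v = mf c b" if "v \<in> newton c" "z \<bullet> v = 1" for v
      using ingz[OF that] gb by (auto simp: gammaf_def)
    have bz: "b$i = 0" if "z$i = 0" for i
    proof -
      have "b \<bullet> expv nu0 = mf c b" using bv expv_in_newton[OF nu0(1)] nu0(2) by auto
      moreover have "b \<bullet> (expv nu0 + axis i 1) = mf c b"
        using bv[OF gen_in_newton[OF nu0(1) axN]] nu0(2) that by (simp add: inner_add_right inner_axis)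
      ultimately show ?thesis by (simp add: inner_add_right inner_axis)
    qed
    define d where "d = b - mf c b *\<^sub>R z"
    have "d = 0"
    proof (rule K)
      show "\<forall>i. z$i = 0 \<longrightarrow> d$i = 0" using bz by (simp add: d_def)
      show "\<forall>nu\<in>supp c. z \<bullet> expv nu = 1 \<longrightarrow> d \<bullet> expv nu = 0"
        using bv expv_in_newton by (auto simp: d_def inner_diff_left)
    qed
    then have beq: "b = mf c b *\<^sub>R z" by (simp add: d_def)
    have "mf c b \<noteq> 0"
    proof
      assume "mf c b = 0"
      then have "b = 0" using beq by simp
      then have gz: "gammaf c z = newton c" using gb gammaf_zero[OF fin ne] by simp
      obtain j where j: "z$j \<noteq> 0" using \<open>z \<noteq> 0\<close> by (metis vec_eq_iff zero_index)
      have "expv nu0 + axis j 1 \<in> gammaf c z" using gz gen_in_newton[OF nu0(1) axN] by simp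
      then have "z \<bullet> (expv nu0 + axis j 1) = 1" using zmf by (simp add: gammaf_def)
      then show False using nu0(2) j by (simp add: inner_add_right inner_axis)
    qed
    moreover have "0 \<le> mf c b" by (rule mf_nonneg[OF fin ne bN])
    ultimately show ?thesis using beq by (intro exI[of _ "mf c b"]) auto
  qed
  have fz: "fcone c z = {t *\<^sub>R z | t. 0 < t}"
  proof
    show "fcone c z \<subseteq> {t *\<^sub>R z | t. 0 < t}" using ray by blast
    show "{t *\<^sub>R z | t. 0 < t} \<subseteq> fcone c z"
      using gammaf_scale[OF fin ne zN] nonneg_scale[OF zN] by (auto simp: fcone_def)
  qed
  obtain \<phi> :: "real \<Rightarrow> rat" where phi: "\<forall>x y. \<phi> (x+y) = \<phi> x + \<phi> y"
    "\<forall>q x. \<phi> (of_rat q * x) = q * \<phi> x" "\<phi> 1 = 1"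
    using rat_functional by blast
  have phi0: "\<phi> 0 = 0" using phi(1)[rule_format, of 0 0] by simp
  define psi :: "real ^ 'n" where "psi = (\<chi> i. of_rat (\<phi> (z$i)))"
  have "z - psi = 0"
  proof (rule K)
    show "\<forall>i. z$i = 0 \<longrightarrow> (z - psi)$i = 0" by (simp add: psi_def phi0)
    show "\<forall>nu\<in>supp c. z \<bullet> expv nu = 1 \<longrightarrow> (z - psi) \<bullet> expv nu = 0"
    proof (intro ballI impI)
      fix nu assume "nu \<in> supp c" "z \<bullet> expv nu = 1"
      have m: "\<phi> (z$i * real (nu$i)) = of_nat (nu$i) * \<phi> (z$i)" for i
        using phi(2)[rule_format, of "of_nat (nu$i)" "z$i"] by (simp add: mult.commute)
      have "psi \<bullet> expv nu = (\<Sum>i\<in>UNIV. of_rat (\<phi> (z$i)) * real (nu$i))"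
        by (simp add: inner_expv psi_def)
      also have "\<dots> = of_rat (\<Sum>i\<in>UNIV. of_nat (nu$i) * \<phi> (z$i))"
        by (simp add: of_rat_sum of_rat_mult mult.commute)
      also have "(\<Sum>i\<in>UNIV. of_nat (nu$i) * \<phi> (z$i)) = \<phi> (z \<bullet> expv nu)"
        by (simp add: inner_expv add_hom_sum[OF phi(1)] m)
      finally have "psi \<bullet> expv nu = 1" using \<open>z \<bullet> expv nu = 1\<close> phi(3) by simp
      then show "(z - psi) \<bullet> expv nu = 0" using \<open>z \<bullet> expv nu = 1\<close> by (simp add: inner_diff_left)
    qed
  qed
  then have "z = psi" by simp
  then have zrat: "\<forall>i. z$i \<in> \<rat>" by (metis psi_def vec_lambda_beta Rats_of_rat)
  obtain k :: "nat ^ 'n" and t where kt: "t > 0" "expv k = t *\<^sub>R z" "Gcd (range (\<lambda>i. k$i)) = 1"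
    using primitive_vec[OF zrat zN \<open>z \<noteq> 0\<close>] by blast
  have "fcone c (expv k) = fcone c z"
    using gammaf_scale[OF fin ne zN kt(1)] kt(2) by (simp add: fcone_def)
  then have "aff_dim (fcone c (expv k)) = 1" using fz aff_dim_ray[OF \<open>z \<noteq> 0\<close>] by simp
  then have G1: "expv k \<in> Gamma1 c" using kt(3) unfolding Gamma1_def by blast
  have mk: "mf c (expv k) = t" using mf_scale[OF fin ne zN, of t] kt zmf by simp
  then have "expv k \<in> Gamma1_plus c" using G1 kt(1) by (simp add: Gamma1_plus_def)
  moreover have "ssum (expv k) / mf c (expv k) = ssum z" using mk kt by (simp add: ssum_scale)
  ultimately show ?thesis by blast
qed

lemma lp_vertex:
  fixes c :: "nat ^ 'n \<Rightarrow> real"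
  assumes fin: "finite (supp c)" and ne: "supp c \<noteq> {}"
    and aN: "a' \<in> nonneg_orthant" and amf: "mf c a' = 1"
  shows "\<exists>z. z \<in> nonneg_orthant \<and> mf c z = 1 \<and> ssum z \<le> ssum a' \<and>
    (\<forall>d. (\<forall>i. z$i = 0 \<longrightarrow> d$i = 0) \<longrightarrow> (\<forall>nu\<in>supp c. z \<bullet> expv nu = 1 \<longrightarrow> d \<bullet> expv nu = 0) \<longrightarrow> d = 0)"
proof -
  define one :: "real ^ 'n" where "one = (\<chi> i. 1)"
  define P :: "(real ^ 'n) set" where "P = (\<Inter>i. {x. inner (axis i (1::real)) x \<ge> (0::real)}) \<inter> (\<Inter>nu\<in>supp c. {x. inner (expv nu) x \<ge> 1})
     \<inter> {x. inner one x \<le> ssum a'}"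
  have memP: "x \<in> P \<longleftrightarrow> x \<in> nonneg_orthant \<and> (\<forall>nu\<in>supp c. 1 \<le> x \<bullet> expv nu) \<and> ssum x \<le> ssum a'" for x
    by (auto simp: P_def nonneg_orthant_def inner_axis' inner_axis inner_commute ssum_inner one_def)
  have closedP: "closed P" unfolding P_def
    by (intro closed_Int closed_INT closed_halfspace_le) (auto intro!: closed_Collect_le continuous_intros)
  have convexP: "convex P" unfolding P_def
    by (intro convex_Int convex_INT convex_halfspace_ge convex_halfspace_le)
  have boundedP: "bounded P"
  proof -
    have "norm x \<le> ssum a'" if "x \<in> P" for x
    proof -
      have "norm x \<le> (\<Sum>i\<in>UNIV. \<bar>x$i\<bar>)" by (rule norm_le_l1_cart)
      also have "\<dots> = ssum x" using that by (simp add: memP nonneg_orthant_def ssum_def)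
      also have "\<dots> \<le> ssum a'" using that by (simp add: memP)
      finally show ?thesis .
    qed
    then show ?thesis by (auto simp: bounded_iff)
  qed
  have compactP: "compact P" using closedP boundedP by (simp add: compact_eq_bounded_closed)
  have a'P: "a' \<in> P" using mf_props(2)[OF fin ne aN] amf aN by (simp add: memP)
  have contS: "continuous_on P ssum" unfolding ssum_inner by (intro continuous_intros)
  obtain x0 where x0: "x0 \<in> P" "\<And>y. y \<in> P \<Longrightarrow> ssum x0 \<le> ssum y"
    using continuous_attains_inf[OF compactP _ contS] a'P by blast
  define F where "F = P \<inter> {x. inner one x = ssum x0}"
  have memF: "x \<in> F \<longleftrightarrow> x \<in> P \<and> ssum x = ssum x0" for x
    by (simp add: F_def ssum_inner one_def inner_commute)
  have F: "compact F" "convex F" "F \<noteq> {}"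
  proof -
    show "compact F" unfolding F_def by (intro compact_Int_closed compactP closed_hyperplane)
    show "convex F" unfolding F_def by (intro convex_Int convexP convex_hyperplane)
    show "F \<noteq> {}" using x0(1) memF by blast
  qed
  obtain z where zext: "z extreme_point_of F" using extreme_point_exists_convex[OF F] by blast
  have zF: "z \<in> F" using zext by (simp add: extreme_point_of_def)
  then have zP: "z \<in> P" and sz: "ssum z = ssum x0" by (auto simp: memF)
  have zN: "z \<in> nonneg_orthant" and zge: "\<forall>nu\<in>supp c. 1 \<le> z \<bullet> expv nu" and za: "ssum z \<le> ssum a'"
    using zP by (auto simp: memP)
  have zmin: "ssum z \<le> ssum y" if "y \<in> nonneg_orthant" "\<forall>nu\<in>supp c. 1 \<le> y \<bullet> expv nu" for y
  proof (cases "ssum y \<le> ssum a'")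
    case True then have "y \<in> P" using that by (simp add: memP)
    then show ?thesis using x0 sz by simp
  next
    case False then show ?thesis using za by simp
  qed
  obtain nu1 where nu1: "nu1 \<in> supp c" using ne by blast
  have "z \<noteq> 0" using zge nu1 by auto
  have "ssum z > 0"
  proof -
    have "ssum z \<ge> 0" using zN by (auto simp: ssum_def nonneg_orthant_def intro: sum_nonneg)
    moreover have "ssum z \<noteq> 0"
    proof
      assume "ssum z = 0"
      then have "\<forall>i. z$i = 0" using zN by (simp add: ssum_def nonneg_orthant_def sum_nonneg_eq_0_iff)
      then show False using \<open>z \<noteq> 0\<close> by (simp add: vec_eq_iff)
    qed
    ultimately show ?thesis by simp
  qed
  define m where "m = mf c z"
  obtain nu0 where nu0: "nu0 \<in> supp c" "z \<bullet> expv nu0 = m"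
    using mf_props(1)[OF fin ne zN] m_def by auto
  have "m \<ge> 1" using zge nu0 by auto
  have "(1/m) *\<^sub>R z \<in> nonneg_orthant" using zN \<open>m \<ge> 1\<close> by (simp add: nonneg_scale)
  moreover have "\<forall>nu\<in>supp c. 1 \<le> ((1/m) *\<^sub>R z) \<bullet> expv nu"
    using mf_props(2)[OF fin ne zN] \<open>m \<ge> 1\<close> by (auto simp: m_def field_simps)
  ultimately have "ssum z \<le> ssum z / m" using zmin[of "(1/m) *\<^sub>R z"] by (simp add: ssum_scale)
  then have "m \<le> 1" using \<open>ssum z > 0\<close> \<open>m \<ge> 1\<close> by (simp add: field_simps)
  then have zmf: "mf c z = 1" using \<open>m \<ge> 1\<close> m_def by simp
  have K: "d = 0" if d1: "\<forall>i. z$i = 0 \<longrightarrow> d$i = 0" and d2: "\<forall>nu\<in>supp c. z \<bullet> expv nu = 1 \<longrightarrow> d \<bullet> expv nu = 0" for d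
  proof (rule ccontr)
    assume "d \<noteq> 0"
    have ev1: "eventually (\<lambda>e. 0 \<le> z$i + e * d$i \<and> 0 \<le> z$i - e * d$i) (at_right (0::real))" for i
    proof (cases "z$i = 0")
      case True then show ?thesis using d1 by simp
    next
      case False
      then have pos: "z$i > 0" using zN by (metis nonneg_orthant_def mem_Collect_eq order_le_less)
      have t1: "((\<lambda>e. z$i + e * d$i) \<longlongrightarrow> z$i + 0 * d$i) (at_right 0)" by (intro tendsto_intros)
      have t2: "((\<lambda>e. z$i - e * d$i) \<longlongrightarrow> z$i - 0 * d$i) (at_right 0)" by (intro tendsto_intros)
      show ?thesis
        using order_tendstoD(1)[OF t1[simplified] pos] order_tendstoD(1)[OF t2[simplified] pos]
        by eventually_elim auto
    qed
    have ev2: "eventually (\<lambda>e. 1 \<le> z \<bullet> expv nu + e * (d \<bullet> expv nu) \<and> 1 \<le> z \<bullet> expv nu - e * (d \<bullet> expv nu)) (at_right (0::real))"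
      if "nu \<in> supp c" for nu
    proof (cases "z \<bullet> expv nu = 1")
      case True then show ?thesis using d2 that by simp
    next
      case False
      then have pos: "z \<bullet> expv nu > 1" using zge that by force
      have t1: "((\<lambda>e. z \<bullet> expv nu + e * (d \<bullet> expv nu)) \<longlongrightarrow> z \<bullet> expv nu + 0 * (d \<bullet> expv nu)) (at_right 0)" by (intro tendsto_intros)
      have t2: "((\<lambda>e. z \<bullet> expv nu - e * (d \<bullet> expv nu)) \<longlongrightarrow> z \<bullet> expv nu - 0 * (d \<bullet> expv nu)) (at_right 0)" by (intro tendsto_intros)
      show ?thesis
        using order_tendstoD(1)[OF t1[simplified] pos] order_tendstoD(1)[OF t2[simplified] pos]
        by eventually_elim auto
    qed
    have "eventually (\<lambda>e. (\<forall>i. 0 \<le> z$i + e * d$i \<and> 0 \<le> z$i - e * d$i) \<and>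
       (\<forall>nu\<in>supp c. 1 \<le> z \<bullet> expv nu + e * (d \<bullet> expv nu) \<and> 1 \<le> z \<bullet> expv nu - e * (d \<bullet> expv nu))) (at_right (0::real))"
    proof (rule eventually_conj)
      show "eventually (\<lambda>e. \<forall>i. 0 \<le> z$i + e * d$i \<and> 0 \<le> z$i - e * d$i) (at_right (0::real))"
        by (rule eventually_all_finite) (rule ev1)
      show "eventually (\<lambda>e. \<forall>nu\<in>supp c. 1 \<le> z \<bullet> expv nu + e * (d \<bullet> expv nu) \<and> 1 \<le> z \<bullet> expv nu - e * (d \<bullet> expv nu)) (at_right (0::real))"
        by (rule eventually_ball_finite[OF fin]) (use ev2 in blast)
    qed
    then obtain b::real where b: "b > 0" and bP: "\<And>e. 0 < e \<Longrightarrow> e < b \<Longrightarrow>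
       (\<forall>i. 0 \<le> z$i + e * d$i \<and> 0 \<le> z$i - e * d$i) \<and>
       (\<forall>nu\<in>supp c. 1 \<le> z \<bullet> expv nu + e * (d \<bullet> expv nu) \<and> 1 \<le> z \<bullet> expv nu - e * (d \<bullet> expv nu))"
      unfolding eventually_at_right_field by auto
    define e where "e = b / 2"
    have e: "0 < e" "e < b" using b by (auto simp: e_def)
    define p where "p = z + e *\<^sub>R d"
    define q where "q = z - e *\<^sub>R d"
    have pQ: "p \<in> nonneg_orthant" "\<forall>nu\<in>supp c. 1 \<le> p \<bullet> expv nu"
      using bP[OF e] by (auto simp: p_def nonneg_orthant_def inner_add_left)
    have qQ: "q \<in> nonneg_orthant" "\<forall>nu\<in>supp c. 1 \<le> q \<bullet> expv nu"
      using bP[OF e] by (auto simp: q_def nonneg_orthant_def inner_diff_left)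
    have sp: "ssum p = ssum z + e * ssum d" by (simp add: p_def ssum_add ssum_scale)
    have sq: "ssum q = ssum z - e * ssum d" by (simp add: q_def ssum_diff ssum_scale)
    have "ssum z \<le> ssum p" "ssum z \<le> ssum q" using zmin pQ qQ by auto
    then have "e * ssum d = 0" using sp sq by linarith
    then have spz: "ssum p = ssum z" "ssum q = ssum z" using sp sq by auto
    have "p \<in> F" "q \<in> F" using pQ qQ spz sz za by (auto simp: memF memP)
    moreover have "q \<noteq> p"
    proof
      assume "q = p"
      then have "\<forall>i. z$i - e * d$i = z$i + e * d$i" by (simp add: p_def q_def vec_eq_iff)
      then have "\<forall>i. d$i = 0" using e by auto
      then show False using \<open>d \<noteq> 0\<close> by (simp add: vec_eq_iff)
    qed
    moreover have "midpoint q p = z" by (simp add: midpoint_def p_def q_def vec_eq_iff)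
    ultimately show False using zext midpoint_in_open_segment[of q p]
      unfolding extreme_point_of_def by metis
  qed
  show ?thesis using zN zmf za K by blast
qed

lemma ssum_nonneg: "a \<in> nonneg_orthant \<Longrightarrow> 0 \<le> ssum a"
  by (auto simp: ssum_def nonneg_orthant_def intro: sum_nonneg)

theorem mainTheorem5:
  fixes c :: "nat ^ 'n \<Rightarrow> real"
  assumes "finite (supp c)"
    and "supp c \<noteq> {}"
    and "nondegenerate c"
    and "polyfun c UNIV 0 = 0"
  shows "leading_exponent c =
           Sup {hf c a | a. a \<in> nonneg_orthant \<and> 0 \<le> mf c a \<and> mf c a \<le> 1}"
proof -
  note fin = assms(1) and ne = assms(2)
  define L where "L = {0} \<union> {1 - ssum a / mf c a | a. a \<in> Gamma1_plus c}"
  define R where "R = {hf c a | a. a \<in> nonneg_orthant \<and> 0 \<le> mf c a \<and> mf c a \<le> 1}"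
  have zN: "(0::real^'n) \<in> nonneg_orthant" by (simp add: nonneg_orthant_def)
  have "0 \<in> R" unfolding R_def using zN mf_zero[OF fin ne]
    by (auto simp: hf_def ssum_def intro!: exI[of _ 0])
  have bR: "bdd_above R"
    unfolding R_def bdd_above_def
  proof (intro exI[of _ 1] ballI)
    fix x assume "x \<in> {hf c a |a. a \<in> nonneg_orthant \<and> 0 \<le> mf c a \<and> mf c a \<le> 1}"
    then obtain a where "a \<in> nonneg_orthant" "mf c a \<le> 1" "x = hf c a" by auto
    then show "x \<le> 1" using ssum_nonneg[of a] by (simp add: hf_def)
  qed
  have G1N: "a \<in> nonneg_orthant" if "a \<in> Gamma1_plus c" for a
    using that expv_nonneg by (auto simp: Gamma1_plus_def Gamma1_def)
  have bL: "bdd_above L"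
  proof -
    have "x \<le> 1" if "x \<in> L" for x
      using that ssum_nonneg[OF G1N] by (auto simp: L_def Gamma1_plus_def)
    then show ?thesis by (auto simp: bdd_above_def)
  qed
  have LR: "L \<subseteq> R"
  proof
    fix x assume "x \<in> L"
    then consider "x = 0" | a where "a \<in> Gamma1_plus c" "x = 1 - ssum a / mf c a" by (auto simp: L_def)
    then show "x \<in> R"
    proof cases
      case 1 then show ?thesis using \<open>0 \<in> R\<close> by simp
    next
      case 2
      have aN: "a \<in> nonneg_orthant" using G1N 2 by simp
      have m: "mf c a > 0" using 2 by (simp add: Gamma1_plus_def)
      have "mf c ((1 / mf c a) *\<^sub>R a) = 1" using mf_scale[OF fin ne aN, of "1 / mf c a"] m by simp
      moreover have "hf c ((1 / mf c a) *\<^sub>R a) = x"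
        using calculation 2 by (simp add: hf_def ssum_scale)
      ultimately show ?thesis unfolding R_def using nonneg_scale[OF aN, of "1 / mf c a"] m by force
    qed
  qed
  have le1: "Sup L \<le> Sup R" by (rule cSup_subset_mono) (use bR LR in \<open>auto simp: L_def\<close>)
  have le2: "Sup R \<le> Sup L"
  proof (rule cSup_least)
    show "R \<noteq> {}" using \<open>0 \<in> R\<close> by blast
    fix x assume "x \<in> R"
    then obtain a where a: "a \<in> nonneg_orthant" "0 \<le> mf c a" "mf c a \<le> 1" "x = hf c a"
      by (auto simp: R_def)
    have "0 \<le> Sup L" using bL by (intro cSup_upper) (auto simp: L_def)
    show "x \<le> Sup L"
    proof (cases "x \<le> 0")
      case True then show ?thesis using \<open>0 \<le> Sup L\<close> by simp
    next
      case False
      define m where "m = mf c a"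
      have "m > 0" using False a ssum_nonneg[OF a(1)] by (simp add: hf_def m_def)
      define a' where "a' = (1/m) *\<^sub>R a"
      have a'N: "a' \<in> nonneg_orthant" using nonneg_scale[OF a(1)] \<open>m > 0\<close> by (simp add: a'_def)
      have a'm: "mf c a' = 1" using mf_scale[OF fin ne a(1), of "1/m"] \<open>m > 0\<close> by (simp add: a'_def m_def)
      have "hf c a' = x / m" using a'm a \<open>m > 0\<close> by (simp add: hf_def a'_def ssum_scale m_def field_simps)
      moreover have "x \<le> x / m" using False a(3) \<open>m > 0\<close> by (simp add: m_def field_simps)
      ultimately have xa': "x \<le> 1 - ssum a'" using a'm by (simp add: hf_def)
      obtain z where z: "z \<in> nonneg_orthant" "mf c z = 1" "ssum z \<le> ssum a'"
        "\<forall>d. (\<forall>i. z$i = 0 \<longrightarrow> d$i = 0) \<longrightarrow> (\<forall>nu\<in>supp c. z \<bullet> expv nu = 1 \<longrightarrow> d \<bullet> expv nu = 0) \<longrightarrow> d = 0"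
        using lp_vertex[OF fin ne a'N a'm] by blast
      obtain r where r: "r \<in> Gamma1_plus c" "ssum r / mf c r = ssum z"
        using vertex_ray[OF fin ne z(1) z(2)] z(4) by blast
      have "1 - ssum r / mf c r \<in> L" using r(1) by (auto simp: L_def)
      then have "1 - ssum r / mf c r \<le> Sup L" using bL by (intro cSup_upper)
      then show ?thesis using xa' r(2) z(3) by linarith
    qed
  qed
  show ?thesis unfolding leading_exponent_def using le1 le2 by (simp add: L_def R_def)
qed

end
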